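(* Let $f: X \to Y$ be a continuous surjection which is open, closed and finite-to-one (each fiber $f^{-1}(y)$ is finite), where $Y$ is set strongly star Hurewicz. Then $X$ is nearly set strongly star Hurewicz.
   Context: For a subset $A$ of a space $X$ and a collection $\mathcal{U}$ of subsets of $X$, ${\rm St}(A,\mathcal{U}) = \bigcup\{U \in \mathcal{U}: U \cap A \neq \emptyset\}$. A space $Y$ is set strongly star Hurewicz if for each nonempty $B \subset Y$ and each sequence $(\mathcal{V}_n: n\in\mathbb{N})$ of collections of sets open in $Y$ with $\overline{B} \subset \bigcup\mathcal{V}_n$ for all $n$, there are finite sets $F_n \subset \overline{B}$ such that each $y \in B$ lies in ${\rm St}(F_n,\mathcal{V}_n)$ for all but finitely many $n$. A space $X$ is nearly set strongly star Hurewicz if for each nonempty $A \subset X$ and each sequence $(\mathcal{U}_n: n \in \mathbb{N})$ of open covers of $X$ there is a sequence $(F_n: n\in\mathbb{N})$ of finite subsets of $X$ such that each $x \in A$ lies in ${\rm St}(F_n,\mathcal{U}_n)$ for all but finitely many $n$. *)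

theory Defs
  imports "HOL-Analysis.Analysis"
begin

definition St :: "'a set \<Rightarrow> 'a set set \<Rightarrow> 'a set" where
  "St A \<U> = \<Union>{U \<in> \<U>. U \<inter> A \<noteq> {}}"

definition set_strongly_star_Hurewicz :: "'a topology \<Rightarrow> bool" where
  "set_strongly_star_Hurewicz Y \<longleftrightarrow>
     (\<forall>B \<V>. B \<noteq> {} \<and> B \<subseteq> topspace Y \<and>
        (\<forall>n. (\<forall>V\<in>\<V> n. openin Y V) \<and> Y closure_of B \<subseteq> \<Union>(\<V> n)) \<longrightarrow>
        (\<exists>F. (\<forall>n. finite (F n) \<and> F n \<subseteq> Y closure_of B) \<and>
             (\<forall>y\<in>B. \<forall>\<^sub>F n in sequentially. y \<in> St (F n) (\<V> n))))"

definition nearly_set_strongly_star_Hurewicz :: "'a topology \<Rightarrow> bool" where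
  "nearly_set_strongly_star_Hurewicz X \<longleftrightarrow>
     (\<forall>A \<U>. A \<noteq> {} \<and> A \<subseteq> topspace X \<and>
        (\<forall>n. (\<forall>U\<in>\<U> n. openin X U) \<and> \<Union>(\<U> n) = topspace X) \<longrightarrow>
        (\<exists>F. (\<forall>n. finite (F n) \<and> F n \<subseteq> topspace X) \<and>
             (\<forall>x\<in>A. \<forall>\<^sub>F n in sequentially. x \<in> St (F n) (\<U> n))))"

end

theory Submission
  imports Defs
begin

theorem theorem3p14:
  fixes X :: "'a topology" and Y :: "'b topology" and f :: "'a \<Rightarrow> 'b"
  assumes "continuous_map X Y f"
    and "f ` topspace X = topspace Y"
    and "open_map X Y f"
    and "closed_map X Y f"
    and "\<And>y. y \<in> topspace Y \<Longrightarrow> finite {x \<in> topspace X. f x = y}"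
    and "set_strongly_star_Hurewicz Y"
  shows "nearly_set_strongly_star_Hurewicz X"
  unfolding nearly_set_strongly_star_Hurewicz_def
proof (intro allI impI)
  fix A and \<U> :: "nat \<Rightarrow> 'a set set"
  assume H: "A \<noteq> {} \<and> A \<subseteq> topspace X \<and> (\<forall>n. (\<forall>U\<in>\<U> n. openin X U) \<and> \<Union>(\<U> n) = topspace X)"
  have "\<forall>n x. \<exists>U. x \<in> topspace X \<longrightarrow> U \<in> \<U> n \<and> x \<in> U"
    using H by (metis Union_iff)
  then obtain C where C: "\<And>n x. x \<in> topspace X \<Longrightarrow> C n x \<in> \<U> n \<and> x \<in> C n x"
    by metis
  have Co: "\<And>n x. x \<in> topspace X \<Longrightarrow> openin X (C n x)" using C H by blast
  define fib where "fib y = {x \<in> topspace X. f x = y}" for y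
  define V where "V n y = (\<Inter>x\<in>fib y. f ` (C n x)) \<inter> topspace Y \<inter>
      (topspace Y - f ` (topspace X - (\<Union>x\<in>fib y. C n x)))" for n y
  define \<V> where "\<V> n = V n ` topspace Y" for n
  have fibfin: "\<And>y. y \<in> topspace Y \<Longrightarrow> finite (fib y)" using assms(5) fib_def by simp
  have Vopen: "openin Y (V n y)" if y: "y \<in> topspace Y" for n y
  proof -
    have 1: "openin Y ((\<Inter>x\<in>fib y. f ` (C n x)) \<inter> topspace Y)"
      apply (rule openin_INT)
      using fibfin[OF y] apply simp
      using assms(3) Co unfolding open_map_def fib_def by blast
    have "closedin X (topspace X - (\<Union>x\<in>fib y. C n x))"
      using Co fib_def by (intro closedin_diff) auto
    then have "closedin Y (f ` (topspace X - (\<Union>x\<in>fib y. C n x)))"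
      using assms(4) closed_map_def by blast
    then have 2: "openin Y (topspace Y - f ` (topspace X - (\<Union>x\<in>fib y. C n x)))"
      by blast
    show ?thesis unfolding V_def by (rule openin_Int[OF 1 2])
  qed
  have Vcov: "y \<in> V n y" if y: "y \<in> topspace Y" for n y
    unfolding V_def fib_def using C y by auto
  have key1: "\<exists>w\<in>fib y. x \<in> C n w" if "x \<in> topspace X" "f x \<in> V n y" for x n y
    using that unfolding V_def by blast
  have key2: "\<exists>q\<in>C n w. f q = p" if "p \<in> V n y" "w \<in> fib y" for p n w y
    using that unfolding V_def by blast
  define B where "B = f ` A"
  have "B \<noteq> {}" "B \<subseteq> topspace Y" using H assms(2) B_def by auto
  moreover have "\<forall>n. (\<forall>V\<in>\<V> n. openin Y V) \<and> Y closure_of B \<subseteq> \<Union>(\<V> n)"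
  proof
    fix n
    have "Y closure_of B \<subseteq> \<Union>(\<V> n)"
    proof
      fix y assume "y \<in> Y closure_of B"
      then have "y \<in> topspace Y" using closure_of_subset_topspace[of Y B] by blast
      then show "y \<in> \<Union>(\<V> n)" using Vcov unfolding \<V>_def by blast
    qed
    moreover have "\<forall>V\<in>\<V> n. openin Y V" using Vopen unfolding \<V>_def by blast
    ultimately show "(\<forall>V\<in>\<V> n. openin Y V) \<and> Y closure_of B \<subseteq> \<Union>(\<V> n)" by blast
  qed
  ultimately have P: "B \<noteq> {} \<and> B \<subseteq> topspace Y \<and>
        (\<forall>n. (\<forall>V\<in>\<V> n. openin Y V) \<and> Y closure_of B \<subseteq> \<Union>(\<V> n))" by blast
  have "\<exists>F. (\<forall>n. finite (F n) \<and> F n \<subseteq> Y closure_of B) \<and>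
             (\<forall>y\<in>B. \<forall>\<^sub>F n in sequentially. y \<in> St (F n) (\<V> n))"
    using assms(6)[unfolded set_strongly_star_Hurewicz_def, THEN spec[where x=B],
      THEN spec[where x=\<V>], THEN mp, OF P] .
  then obtain F :: "nat \<Rightarrow> 'b set" where F: "\<And>n. finite (F n) \<and> F n \<subseteq> Y closure_of B"
    and FS: "\<And>y. y\<in>B \<Longrightarrow> \<forall>\<^sub>F n in sequentially. y \<in> St (F n) (\<V> n)"
    by blast
  define F' where "F' n = {q \<in> topspace X. f q \<in> F n}" for n
  have "finite (F' n) \<and> F' n \<subseteq> topspace X" for n
  proof -
    have FY: "F n \<subseteq> topspace Y" using F[of n] closure_of_subset_topspace[of Y B] by blast
    have "F' n = (\<Union>y\<in>F n. fib y)" unfolding F'_def fib_def by auto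
    moreover have "finite (\<Union>y\<in>F n. fib y)" using F FY fibfin by blast
    ultimately show ?thesis unfolding F'_def by auto
  qed
  moreover have "\<forall>\<^sub>F n in sequentially. x \<in> St (F' n) (\<U> n)" if x: "x \<in> A" for x
  proof -
    have xX: "x \<in> topspace X" using x H by blast
    have "\<forall>\<^sub>F n in sequentially. f x \<in> St (F n) (\<V> n)" using FS x B_def by blast
    then show ?thesis
    proof (rule eventually_mono)
      fix n assume "f x \<in> St (F n) (\<V> n)"
      then obtain y p where y: "y \<in> topspace Y" "f x \<in> V n y" "p \<in> V n y" "p \<in> F n"
        unfolding St_def \<V>_def by blast
      obtain w where w: "w \<in> fib y" "x \<in> C n w" using key1[OF xX y(2)] by blast
      obtain q where q: "q \<in> C n w" "f q = p" using key2[OF y(3) w(1)] by blast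
      have wX: "w \<in> topspace X" using w fib_def by simp
      have "q \<in> topspace X" using q Co[OF wX] openin_subset by blast
      then have "q \<in> F' n" using q y F'_def by simp
      then show "x \<in> St (F' n) (\<U> n)"
        unfolding St_def using C[OF wX] w q by blast
    qed
  qed
  ultimately show "\<exists>F. (\<forall>n. finite (F n) \<and> F n \<subseteq> topspace X) \<and>
             (\<forall>x\<in>A. \<forall>\<^sub>F n in sequentially. x \<in> St (F n) (\<U> n))" by blast
qed

end
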